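(* Let $n$ and $k$ be odd integers with $k\ge3$ and $n>2k+1$. Then $$\chi_c(\mathrm{Pet}(n,k))\ \le\ \frac{2n}{n-k}.$$
   Context: For integers $n,k$ with $2<2k\le n$, the generalized Petersen graph $\mathrm{Pet}(n,k)$ has vertex set $\{u_0,\dots,u_{n-1}\}\cup\{v_0,\dots,v_{n-1}\}$ and edge set $\{u_iu_{i+1}\}\cup\{u_iv_i\}\cup\{v_iv_{i+k}\}$, indices modulo $n$. For integers $p\ge 2q\ge 2$, the circular complete graph $K_{p/q}$ has vertex set $\{0,\dots,p-1\}$ with $i\sim j$ iff $q\le|i-j|\le p-q$; the circular chromatic number $\chi_c(G)$ is the minimum of $p/q$ over all such $p,q$ for which $G$ admits a homomorphism to $K_{p/q}$. *)

theory Defs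
  imports Complex_Main
begin

text \<open>Generalized Petersen graph Pet(n,k). Vertices are pairs (i, b) with i < n;
  (i, False) is the outer vertex u_i, (i, True) the inner vertex v_i.
  Indices are taken modulo n.\<close>

definition pet_vertices :: "nat \<Rightarrow> (nat \<times> bool) set" where
  "pet_vertices n = {0..<n} \<times> UNIV"

definition pet_edge :: "nat \<Rightarrow> nat \<Rightarrow> nat \<times> bool \<Rightarrow> nat \<times> bool \<Rightarrow> bool" where
  "pet_edge n k x y \<longleftrightarrow>
     x \<in> pet_vertices n \<and> y \<in> pet_vertices n \<and>
     ( (\<not> snd x \<and> \<not> snd y \<and> (fst y = (fst x + 1) mod n \<or> fst x = (fst y + 1) mod n))
     \<or> (fst x = fst y \<and> snd x \<noteq> snd y)
     \<or> (snd x \<and> snd y \<and> (fst y = (fst x + k) mod n \<or> fst x = (fst y + k) mod n)))"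

definition circ_edge :: "nat \<Rightarrow> nat \<Rightarrow> nat \<Rightarrow> nat \<Rightarrow> bool" where
  "circ_edge p q i j \<longleftrightarrow> i < p \<and> j < p \<and>
     int q \<le> \<bar>int i - int j\<bar> \<and> \<bar>int i - int j\<bar> \<le> int p - int q"

definition circ_hom :: "'a set \<Rightarrow> ('a \<Rightarrow> 'a \<Rightarrow> bool) \<Rightarrow> nat \<Rightarrow> nat \<Rightarrow> ('a \<Rightarrow> nat) \<Rightarrow> bool" where
  "circ_hom V E p q f \<longleftrightarrow> (\<forall>x\<in>V. f x < p) \<and> (\<forall>x y. E x y \<longrightarrow> circ_edge p q (f x) (f y))"

definition circ_chrom :: "'a set \<Rightarrow> ('a \<Rightarrow> 'a \<Rightarrow> bool) \<Rightarrow> real" where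
  "circ_chrom V E = Inf {real p / real q | p q. 1 \<le> q \<and> 2 * q \<le> p \<and> (\<exists>f. circ_hom V E p q f)}"

end

theory Submission
  imports Defs
begin

lemma mod_add_char:
  fixes x y n k :: nat
  assumes "x < n" "y < n" "k < n"
  shows "y = (x + k) mod n \<longleftrightarrow> (x + k < n \<and> y = x + k) \<or> (x + k \<ge> n \<and> y + n = x + k)"
proof (cases "x + k < n")
  case True then show ?thesis by auto
next
  case False
  then have "(x + k) mod n = x + k - n"
    using assms by (simp add: mod_if)
  then show ?thesis using False by auto
qed

definition colr :: "nat \<Rightarrow> nat \<times> bool \<Rightarrow> nat" where
  "colr n x = (if odd (fst x) = snd x then fst x else fst x + n)"

lemma hom:
  fixes n k :: nat
  assumes "odd n" and "odd k" and "k \<ge> 1" and "k < n"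
  shows "circ_hom (pet_vertices n) (pet_edge n k) (2*n) (n-k) (colr n)"
  unfolding circ_hom_def
proof (intro conjI ballI allI impI)
  fix x assume "x \<in> pet_vertices n"
  then show "colr n x < 2*n" by (auto simp: pet_vertices_def colr_def)
next
  fix x y assume e: "pet_edge n k x y"
  obtain i b j c where xy: "x = (i,b)" "y = (j,c)" by fastforce
  have ij: "i < n" "j < n" using e xy by (auto simp: pet_edge_def pet_vertices_def)
  have one: "1 < n" using assms by simp
  note m1 = mod_add_char[OF ij(1) ij(2) one] mod_add_char[OF ij(2) ij(1) one]
  note mk = mod_add_char[OF ij(1) ij(2) assms(4)] mod_add_char[OF ij(2) ij(1) assms(4)]
  have E: "(\<not> b \<and> \<not> c \<and> (j = (i + 1) mod n \<or> i = (j + 1) mod n))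
     \<or> (i = j \<and> b \<noteq> c)
     \<or> (b \<and> c \<and> (j = (i + k) mod n \<or> i = (j + k) mod n))"
    using e xy by (simp add: pet_edge_def)
  have ce: "circ_edge (2*n) (n-k) u w"
    if "u < 2*n" "w < 2*n" "int n - int k \<le> \<bar>int u - int w\<bar>" "\<bar>int u - int w\<bar> \<le> int n + int k" for u w
    using that assms by (simp add: circ_edge_def of_nat_diff)
  have oi: "odd (i+1) \<longleftrightarrow> \<not> odd i" "odd (j+1) \<longleftrightarrow> \<not> odd j"
      "odd (i+k) \<longleftrightarrow> \<not> odd i" "odd (j+k) \<longleftrightarrow> \<not> odd j"
    using assms by auto
  have on: "odd (m + n) \<longleftrightarrow> \<not> odd m" for m using assms by auto
  show "circ_edge (2*n) (n-k) (colr n x) (colr n y)"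
    unfolding colr_def xy fst_conv snd_conv
  proof (rule ce)
    show "(if odd i = b then i else i + n) < 2 * n" using ij by auto
    show "(if odd j = c then j else j + n) < 2 * n" using ij by auto
    have "int n - int k \<le> \<bar>int (if odd i = b then i else i + n) - int (if odd j = c then j else j + n)\<bar> \<and>
          \<bar>int (if odd i = b then i else i + n) - int (if odd j = c then j else j + n)\<bar> \<le> int n + int k"
      using E unfolding m1 mk
    proof (elim disjE conjE)
      assume "\<not> b" "\<not> c" "i + 1 < n" "j = i + 1" then show ?thesis using oi assms by auto
    next
      assume "\<not> b" "\<not> c" "n \<le> i + 1" "j + n = i + 1"
      then have "j = 0" "i + 1 = n" using ij by auto
      then show ?thesis using \<open>\<not> b\<close> \<open>\<not> c\<close> on[of i] assms by auto
    next
      assume "\<not> b" "\<not> c" "j + 1 < n" "i = j + 1" then show ?thesis using oi assms by auto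
    next
      assume "\<not> b" "\<not> c" "n \<le> j + 1" "i + n = j + 1"
      then have "i = 0" "j + 1 = n" using ij by auto
      then show ?thesis using \<open>\<not> b\<close> \<open>\<not> c\<close> on[of j] assms by auto
    next
      assume "i = j" "b \<noteq> c" then show ?thesis using assms by auto
    next
      assume "b" "c" "i + k < n" "j = i + k" then show ?thesis using oi assms by auto
    next
      assume "b" "c" "n \<le> i + k" "j + n = i + k"
      then have "odd j \<longleftrightarrow> odd i" using on[of j] oi by metis
      then show ?thesis using \<open>b\<close> \<open>c\<close> \<open>j + n = i + k\<close> assms by auto
    next
      assume "b" "c" "j + k < n" "i = j + k" then show ?thesis using oi assms by auto
    next
      assume "b" "c" "n \<le> j + k" "i + n = j + k"
      then have "odd j \<longleftrightarrow> odd i" using on[of i] oi by metis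
      then show ?thesis using \<open>b\<close> \<open>c\<close> \<open>i + n = j + k\<close> assms by auto
    qed
    then show "int n - int k \<le> \<bar>int (if odd i = b then i else i + n) - int (if odd j = c then j else j + n)\<bar>"
       "\<bar>int (if odd i = b then i else i + n) - int (if odd j = c then j else j + n)\<bar> \<le> int n + int k" by auto
  qed
qed

theorem corollary6:
  fixes n k :: nat
  assumes "odd n" and "odd k" and "k \<ge> 3" and "n > 2 * k + 1"
  shows "circ_chrom (pet_vertices n) (pet_edge n k) \<le> 2 * real n / (real n - real k)"
proof -
  have h: "circ_hom (pet_vertices n) (pet_edge n k) (2*n) (n-k) (colr n)"
    using hom assms by simp
  have mem: "real (2*n) / real (n-k) \<in> {real p / real q | p q. 1 \<le> q \<and> 2 * q \<le> p \<and> (\<exists>f. circ_hom (pet_vertices n) (pet_edge n k) p q f)}"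
    using h assms by fastforce
  have bdd: "bdd_below {real p / real q | p q. 1 \<le> q \<and> 2 * q \<le> p \<and> (\<exists>f. circ_hom (pet_vertices n) (pet_edge n k) p q f)}"
    by (rule bdd_belowI[where m=0]) auto
  have "circ_chrom (pet_vertices n) (pet_edge n k) \<le> real (2*n) / real (n-k)"
    unfolding circ_chrom_def by (rule cInf_lower[OF mem bdd])
  also have "\<dots> = 2 * real n / (real n - real k)" using assms by (simp add: of_nat_diff)
  finally show ?thesis .
qed

end
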